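(* Let $l_0,\ldots,l_{N-1}$ be lines in the real projective plane in bounded general position, with associated graph $G$. Suppose $v_0,\ldots,v_{m-1}$ are vertices of $G$ connected consecutively by edges $e_0,\ldots,e_{m-1}$ of $G$ lying on distinct lines of the arrangement, and that these form (the boundary of) a convex $m$-polygon $V$. Then $V$ is an alcove.
   Context: Lines in $\mathbb{R}P^2$ are in general position if no three of them pass through a common point, and in bounded position if all their pairwise intersection points lie in the affine plane $\mathbb{R}^2$. For lines in bounded general position, the graph $G$ has as vertices the pairwise intersection points of the lines; two vertices $v_1,v_2$ are joined by an edge if some line of the arrangement contains both and no third vertex lies between them on that line; the edge is the closed segment joining them. An alcove is a subset $V\subset\mathbb{R}^2$ such that (i) $V$ is compact, convex and connected, (ii) its boundary $\partial V$ is a union of edges of $G$ belonging to distinct lines, and (iii) $V$ contains no proper subset $W$ satisfying (i) and (ii). *)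

theory Defs
  imports "HOL-Analysis.Analysis"
begin

text \<open>An (affine) line in the plane \<open>real^2\<close>.  Lines of \<open>RP^2\<close> in bounded position
  are never the line at infinity, so they are exactly affine lines of \<open>R^2\<close>.\<close>
definition is_line :: "(real^2) set \<Rightarrow> bool" where
  "is_line S \<longleftrightarrow> (\<exists>a c. a \<noteq> 0 \<and> S = {x. a \<bullet> x = c})"

definition bounded_general_position :: "(nat \<Rightarrow> (real^2) set) \<Rightarrow> nat \<Rightarrow> bool" where
  "bounded_general_position l N \<longleftrightarrow>
     (\<forall>i<N. is_line (l i)) \<and>
     (\<forall>i<N. \<forall>j<N. i \<noteq> j \<longrightarrow> l i \<noteq> l j) \<and>
     (\<forall>i<N. \<forall>j<N. i \<noteq> j \<longrightarrow> l i \<inter> l j \<noteq> {}) \<and>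
     (\<forall>i<N. \<forall>j<N. \<forall>k<N. i \<noteq> j \<and> j \<noteq> k \<and> i \<noteq> k \<longrightarrow> l i \<inter> l j \<inter> l k = {})"

definition arr_vertex :: "(nat \<Rightarrow> (real^2) set) \<Rightarrow> nat \<Rightarrow> real^2 \<Rightarrow> bool" where
  "arr_vertex l N p \<longleftrightarrow> (\<exists>i<N. \<exists>j<N. i \<noteq> j \<and> p \<in> l i \<and> p \<in> l j)"

definition arr_edge_on :: "(nat \<Rightarrow> (real^2) set) \<Rightarrow> nat \<Rightarrow> nat \<Rightarrow> real^2 \<Rightarrow> real^2 \<Rightarrow> bool" where
  "arr_edge_on l N i v1 v2 \<longleftrightarrow>
     i < N \<and> arr_vertex l N v1 \<and> arr_vertex l N v2 \<and> v1 \<noteq> v2 \<and>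
     v1 \<in> l i \<and> v2 \<in> l i \<and>
     (\<forall>w. arr_vertex l N w \<longrightarrow> w \<notin> open_segment v1 v2)"

definition arr_edges :: "(nat \<Rightarrow> (real^2) set) \<Rightarrow> nat \<Rightarrow> (nat \<times> (real^2) set) set" where
  "arr_edges l N = {(i, closed_segment v1 v2) | i v1 v2. arr_edge_on l N i v1 v2}"

text \<open>Conditions (i) and (ii) of the definition of an alcove.  (i) is read as:
  compact, convex, connected and with nonempty interior (a genuine 2-dimensional region).
  (ii): the boundary is the union of a set of edges of G lying on pairwise distinct lines.\<close>
definition alcove_cond :: "(nat \<Rightarrow> (real^2) set) \<Rightarrow> nat \<Rightarrow> (real^2) set \<Rightarrow> bool" where
  "alcove_cond l N V \<longleftrightarrow>
     compact V \<and> convex V \<and> connected V \<and> interior V \<noteq> {} \<and>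
     (\<exists>E. E \<subseteq> arr_edges l N \<and> inj_on fst E \<and> frontier V = \<Union>(snd ` E))"

definition alcove :: "(nat \<Rightarrow> (real^2) set) \<Rightarrow> nat \<Rightarrow> (real^2) set \<Rightarrow> bool" where
  "alcove l N V \<longleftrightarrow> alcove_cond l N V \<and> \<not> (\<exists>W. W \<subset> V \<and> alcove_cond l N W)"

end

theory Submission imports Defs begin

lemma line_dir:
  fixes a u w :: "real^2"
  assumes "a \<noteq> 0" "a \<bullet> u = 0" "a \<bullet> w = 0" "w \<noteq> 0"
  shows "\<exists>t. u = t *\<^sub>R w"
proof -
  have e1: "a$1 * u$1 + a$2 * u$2 = 0" using assms(2) by (simp add: inner_vec_def sum_2)
  have e2: "a$1 * w$1 + a$2 * w$2 = 0" using assms(3) by (simp add: inner_vec_def sum_2)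
  have an: "a$1 \<noteq> 0 \<or> a$2 \<noteq> 0" using assms(1) by (auto simp: vec_eq_iff forall_2)
  have wn: "w$1 \<noteq> 0 \<or> w$2 \<noteq> 0" using assms(4) by (auto simp: vec_eq_iff forall_2)
  have det: "u$1 * w$2 = u$2 * w$1"
  proof (cases "a$1 = 0")
    case True
    with an e1 e2 have "u$2 = 0" "w$2 = 0" by auto
    then show ?thesis by simp
  next
    case False
    from e1 False have "u$1 = - a$2 * u$2 / a$1" by (simp add: field_simps)
    moreover from e2 False have "w$1 = - a$2 * w$2 / a$1" by (simp add: field_simps)
    ultimately show ?thesis by simp
  qed
  show ?thesis
  proof (cases "w$1 = 0")
    case True
    with wn det have "u$1 = 0" by auto
    with True wn show ?thesis
      by (intro exI[of _ "u$2 / w$2"]) (auto simp: vec_eq_iff forall_2)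
  next
    case False
    with det show ?thesis
      by (intro exI[of _ "u$1 / w$1"]) (auto simp: vec_eq_iff forall_2 field_simps)
  qed
qed

lemma edge_line_no_interior:
  fixes V :: "(real^2) set"
  assumes "convex V" "closed_segment p q \<subseteq> frontier V" "p \<noteq> q"
    and "y - p = t *\<^sub>R (q - p)" "y \<in> interior V"
  shows False
proof -
  have y: "y = (1 - t) *\<^sub>R p + t *\<^sub>R q" using assms(4) by (simp add: algebra_simps)
  have pf: "p \<in> frontier V" "q \<in> frontier V" using assms(2) by auto
  hence pc: "p \<in> closure V" "q \<in> closure V" by (auto simp: frontier_def)
  have pni: "p \<notin> interior V" "q \<notin> interior V" using pf by (auto simp: frontier_def)
  consider "0 \<le> t" "t \<le> 1" | "t > 1" | "t < 0" by linarith
  then show False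
  proof cases
    case 1
    then have "y \<in> closed_segment p q" unfolding in_segment using y by blast
    with assms(2,5) show False by (auto simp: frontier_def)
  next
    case 2
    have "q \<in> open_segment y p"
      unfolding in_segment
    proof (intro conjI exI[of _ "1 - 1/t"])
      show "y \<noteq> p"
      proof
        assume "y = p" with assms(4) have "t *\<^sub>R (q - p) = 0" by simp
        with 2 assms(3) show False by simp
      qed
      show "0 < 1 - 1/t" "1 - 1/t < 1" using 2 by auto
      show "q = (1 - (1 - 1 / t)) *\<^sub>R y + (1 - 1 / t) *\<^sub>R p"
      proof -
        have h: "(1/t) *\<^sub>R y = ((1-t)/t) *\<^sub>R p + q" using 2 unfolding y by (simp add: scaleR_add_right)
        have c: "(1 - 1/t) = - ((1-t)/t)" "1 - (1 - 1/t) = 1/t" using 2 by (simp_all add: field_simps)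
        have "q = (1/t) *\<^sub>R y + (- ((1-t)/t)) *\<^sub>R p" using h by simp
        then show ?thesis by (subst c(2), subst c(1))
      qed
    qed
    with in_interior_closure_convex_segment[OF assms(1) assms(5) pc(1)] pni show False by auto
  next
    case 3
    have "p \<in> open_segment y q"
      unfolding in_segment
    proof (intro conjI exI[of _ "-t/(1-t)"])
      show "y \<noteq> q"
      proof
        assume "y = q" with assms(4) have "(1 - t) *\<^sub>R (q - p) = 0" by (simp add: algebra_simps)
        with 3 assms(3) show False by simp
      qed
      show "0 < -t/(1-t)" "-t/(1-t) < 1" using 3 by (auto simp: field_simps)
      have c: "(1 - (- t / (1 - t))) = 1/(1-t)" using 3 by (simp add: field_simps)
      have h1: "(1/(1-t)) *\<^sub>R ((1-t) *\<^sub>R p) = p" using 3 by simp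
      have h2: "(1/(1-t)) *\<^sub>R (t *\<^sub>R q) = (t/(1-t)) *\<^sub>R q" by simp
      have h: "(1/(1-t)) *\<^sub>R y = p + (t/(1-t)) *\<^sub>R q" unfolding y scaleR_add_right h1 h2 ..
      have "p = (1/(1-t)) *\<^sub>R y + (- t / (1 - t)) *\<^sub>R q" unfolding h by simp
      then show "p = (1 - (- t / (1 - t))) *\<^sub>R y + (- t / (1 - t)) *\<^sub>R q"
        by (subst c)
    qed
    with in_interior_closure_convex_segment[OF assms(1) assms(5) pc(2)] pni show False by auto
  qed
qed

theorem lemma1p5:
  fixes l :: "nat \<Rightarrow> (real^2) set" and N m :: nat
    and v :: "nat \<Rightarrow> real^2" and L :: "nat \<Rightarrow> nat" and V :: "(real^2) set"
  assumes "bounded_general_position l N"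
    and "m \<ge> 3"
    and "\<forall>k<m. arr_edge_on l N (L k) (v k) (v (Suc k mod m))"
    and "inj_on L {..<m}"
    and "inj_on v {..<m}"
    and "V = convex hull (v ` {..<m})"
    and "\<forall>k<m. v k extreme_point_of V"
    and "frontier V = (\<Union>k<m. closed_segment (v k) (v (Suc k mod m)))"
  shows "alcove l N V"
proof -
  note bgp = assms(1)[unfolded bounded_general_position_def]
  have edge: "\<And>k. k<m \<Longrightarrow> arr_edge_on l N (L k) (v k) (v (Suc k mod m))" using assms(3) by blast
  have sk: "\<And>k. k<m \<Longrightarrow> Suc k mod m < m" using assms(2) by simp
  have skne: "\<And>k. k<m \<Longrightarrow> Suc k mod m \<noteq> k"
  proof -
    fix k assume k: "k<m"
    show "Suc k mod m \<noteq> k"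
    proof (cases "Suc k < m")
      case True then show ?thesis by simp
    next
      case False then have "Suc k = m" using k by simp
      then show ?thesis using assms(2) by simp
    qed
  qed
  have convV: "convex V" using assms(6) by simp
  have compV: "compact V" using assms(6) compact_convex_hull finite_imp_compact by blast
  have segfr: "\<And>k. k<m \<Longrightarrow> closed_segment (v k) (v (Suc k mod m)) \<subseteq> frontier V"
    using assms(8) by auto
  have isl: "\<And>i. i<N \<Longrightarrow> \<exists>a c. a\<noteq>0 \<and> l i = {x. a \<bullet> x = c}"
    using bgp unfolding is_line_def by blast
  have lconv: "\<And>i. i<N \<Longrightarrow> convex (l i)"
    using isl convex_hyperplane by fastforce
  have key: "\<And>i y. i<N \<Longrightarrow> y \<in> l i \<Longrightarrow> y \<in> interior V \<Longrightarrow> False"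
  proof -
    fix i y assume i: "i<N" and yl: "y \<in> l i" and yi: "y \<in> interior V"
    obtain a c where a: "a \<noteq> 0" and li: "l i = {x. a \<bullet> x = c}" using isl[OF i] by blast
    have ay: "a \<bullet> y = c" using yl li by auto
    have notL: "\<And>k. k<m \<Longrightarrow> L k \<noteq> i"
    proof
      fix k assume k: "k<m" and Lk: "L k = i"
      have "v k \<in> l i" "v (Suc k mod m) \<in> l i" using edge[OF k] Lk by (auto simp: arr_edge_on_def)
      hence e: "a \<bullet> v k = c" "a \<bullet> v (Suc k mod m) = c" using li by auto
      have ne: "v k \<noteq> v (Suc k mod m)" using edge[OF k] by (auto simp: arr_edge_on_def)
      obtain t where t: "y - v k = t *\<^sub>R (v (Suc k mod m) - v k)"
        using line_dir[OF a, of "y - v k" "v (Suc k mod m) - v k"] e ay ne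
        by (auto simp: inner_diff_right)
      show False using edge_line_no_interior[OF convV segfr[OF k] ne t yi] .
    qed
    have Vsub: "V \<subseteq> {x. a \<bullet> x \<le> c}" if "\<forall>k<m. a \<bullet> v k \<le> c"
    proof -
      have "v ` {..<m} \<subseteq> {x. a \<bullet> x \<le> c}" using that by auto
      then show ?thesis using assms(6) hull_minimal[of "v ` {..<m}" "{x. a \<bullet> x \<le> c}" convex] convex_halfspace_le by blast
    qed
    have Vsub2: "V \<subseteq> {x. a \<bullet> x \<ge> c}" if "\<forall>k<m. a \<bullet> v k \<ge> c"
    proof -
      have "v ` {..<m} \<subseteq> {x. a \<bullet> x \<ge> c}" using that by auto
      then show ?thesis using assms(6) hull_minimal[of "v ` {..<m}" "{x. a \<bullet> x \<ge> c}" convex] convex_halfspace_ge by blast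
    qed
    obtain e where e: "e>0" "ball y e \<subseteq> V" using yi mem_interior by blast
    have na: "norm a > 0" using a by simp
    define z1 where "z1 = y + (e/2/norm a) *\<^sub>R a"
    define z2 where "z2 = y - (e/2/norm a) *\<^sub>R a"
    have "dist y z1 = e/2" using na e unfolding z1_def dist_norm by simp
    hence z1V: "z1 \<in> V" using e by auto
    have "dist y z2 = e/2" using na e unfolding z2_def dist_norm by simp
    hence z2V: "z2 \<in> V" using e by auto
    have aa: "a \<bullet> a = norm a * norm a" by (simp add: power2_eq_square[symmetric] power2_norm_eq_inner)
    have az1: "a \<bullet> z1 = c + e/2 * norm a" unfolding z1_def using ay aa na
      by (simp add: inner_add_right)
    have az2: "a \<bullet> z2 = c - e/2 * norm a" unfolding z2_def using ay aa na
      by (simp add: inner_diff_right)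
    have hi: "\<exists>k<m. a \<bullet> v k > c"
    proof (rule ccontr)
      assume "\<not> ?thesis"
      hence "V \<subseteq> {x. a \<bullet> x \<le> c}" by (intro Vsub) (metis leD not_less)
      hence "a \<bullet> z1 \<le> c" using z1V by blast
      moreover have "e/2 * norm a > 0" using e na by simp
      ultimately show False using az1 by linarith
    qed
    have lo: "\<exists>k<m. a \<bullet> v k < c"
    proof (rule ccontr)
      assume "\<not> ?thesis"
      hence "V \<subseteq> {x. a \<bullet> x \<ge> c}" by (intro Vsub2) (metis leD not_less)
      hence "a \<bullet> z2 \<ge> c" using z2V by blast
      moreover have "e/2 * norm a > 0" using e na by simp
      ultimately show False using az2 by linarith
    qed
    have "\<exists>p<m. a \<bullet> v p > c \<and> a \<bullet> v (Suc p mod m) \<le> c"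
    proof (rule ccontr)
      assume H: "\<not> ?thesis"
      obtain k where k: "k<m" "a \<bullet> v k > c" using hi by blast
      have all: "a \<bullet> v ((k+n) mod m) > c" for n
      proof (induction n)
        case 0 then show ?case using k by simp
      next
        case (Suc n)
        have "(k + n) mod m < m" using k by simp
        with H Suc.IH have "a \<bullet> v (Suc ((k+n) mod m) mod m) > c" by (auto simp: not_le)
        then show ?case by (simp add: mod_Suc_eq)
      qed
      obtain j where j: "j<m" "a \<bullet> v j < c" using lo by blast
      have "(k + (j + m - k)) mod m = j" using j k by simp
      with all[of "j + m - k"] j show False by simp
    qed
    then obtain p where p: "p<m" "a \<bullet> v p > c" "a \<bullet> v (Suc p mod m) \<le> c" by blast
    define q where "q = Suc p mod m"
    have q: "q<m" "q \<noteq> p" using sk[OF p(1)] skne[OF p(1)] unfolding q_def by auto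
    define s where "s = (a \<bullet> v p - c)/(a \<bullet> v p - a \<bullet> v q)"
    have s: "0<s" "s\<le>1" using p unfolding s_def q_def by (auto simp: field_simps)
    define z where "z = (1-s) *\<^sub>R v p + s *\<^sub>R v q"
    have pq: "a \<bullet> v p - a \<bullet> v q > 0" using p unfolding q_def by simp
    have sd: "s * (a \<bullet> v p - a \<bullet> v q) = a \<bullet> v p - c" unfolding s_def using pq by simp
    have "a \<bullet> z = (1-s) * (a \<bullet> v p) + s * (a \<bullet> v q)" unfolding z_def by (simp add: inner_add_right)
    also have "\<dots> = a \<bullet> v p - s * (a \<bullet> v p - a \<bullet> v q)" by (simp add: algebra_simps)
    finally have az: "a \<bullet> z = c" unfolding sd by simp
    have zli: "z \<in> l i" using az li by simp
    have ep: "arr_edge_on l N (L p) (v p) (v q)" using edge[OF p(1)] unfolding q_def .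
    have LpN: "L p < N" using ep by (simp add: arr_edge_on_def)
    have "z \<in> closed_segment (v p) (v q)" unfolding in_segment z_def using s by (intro exI[of _ s]) auto
    moreover have "closed_segment (v p) (v q) \<subseteq> l (L p)"
      using ep lconv[OF LpN] by (intro closed_segment_subset) (auto simp: arr_edge_on_def)
    ultimately have zlp: "z \<in> l (L p)" by blast
    have ipn: "i \<noteq> L p" using notL[OF p(1)] by simp
    have zv: "arr_vertex l N z" unfolding arr_vertex_def using i LpN zli zlp ipn by blast
    show False
    proof (cases "s = 1")
      case True
      then have zq: "z = v q" unfolding z_def by simp
      have eq: "arr_edge_on l N (L q) (v q) (v (Suc q mod m))" using edge[OF q(1)] .
      have LqN: "L q < N" and vq: "v q \<in> l (L q)" using eq by (auto simp: arr_edge_on_def)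
      have "L q \<noteq> L p" using assms(4) q p(1) by (auto dest: inj_onD)
      moreover have "i \<noteq> L q" using notL[OF q(1)] by simp
      ultimately have "l i \<inter> l (L p) \<inter> l (L q) = {}" using bgp i LpN LqN ipn by blast
      with zli zlp vq zq show False by blast
    next
      case False
      with s have s1: "s < 1" by simp
      have "v p \<noteq> v q" using ep by (simp add: arr_edge_on_def)
      then have "z \<in> open_segment (v p) (v q)" unfolding in_segment z_def using s s1 by auto
      with ep zv show False by (auto simp: arr_edge_on_def)
    qed
  qed
  have edge_sub: "\<And>i S. (i, S) \<in> arr_edges l N \<Longrightarrow> i < N \<and> S \<subseteq> l i"
  proof -
    fix i S assume "(i, S) \<in> arr_edges l N"
    then obtain v1 v2 where S: "S = closed_segment v1 v2" and ed: "arr_edge_on l N i v1 v2"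
      unfolding arr_edges_def by blast
    have iN: "i < N" "v1 \<in> l i" "v2 \<in> l i" using ed by (auto simp: arr_edge_on_def)
    then show "i < N \<and> S \<subseteq> l i" unfolding S using closed_segment_subset[OF iN(2,3) lconv[OF iN(1)]] by simp
  qed
  have intV: "interior V \<noteq> {}"
  proof -
    have idx: "0 < m" "1 < m" "2 < m" using assms(2) by auto
    have d: "v 0 \<noteq> v 1" "v 0 \<noteq> v 2" "v 1 \<noteq> v 2"
      using idx assms(5) by (auto dest: inj_onD)
    have ex: "v 0 extreme_point_of V" "v 1 extreme_point_of V" "v 2 extreme_point_of V"
      using assms(7) idx by auto
    have inV: "v 0 \<in> V" "v 1 \<in> V" "v 2 \<in> V" using ex by (auto simp: extreme_point_of_def)
    have nb: "\<not> between (b, c) a" if "a extreme_point_of V" "b \<in> V" "c \<in> V" "a \<noteq> b" "a \<noteq> c" for a b c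
      using that by (auto simp: between_mem_segment open_segment_def extreme_point_of_def)
    have "\<not> collinear {v 0, v 1, v 2}"
      unfolding collinear_between_cases using nb ex inV d by metis
    hence dep: "\<not> affine_dependent {v 0, v 1, v 2}"
      using affine_dependent_imp_collinear_3 by blast
    have "card {v 0, v 1, v 2} = Suc (DIM(real^2))" using d by simp
    hence "interior (convex hull {v 0, v 1, v 2}) \<noteq> {}"
      using interior_convex_hull_eq_empty dep by blast
    moreover have "convex hull {v 0, v 1, v 2} \<subseteq> V"
      unfolding assms(6) using idx by (intro hull_mono) auto
    ultimately show ?thesis using interior_mono by blast
  qed
  define E where "E = (\<lambda>k. (L k, closed_segment (v k) (v (Suc k mod m)))) ` {..<m}"
  have condV: "alcove_cond l N V"
    unfolding alcove_cond_def
  proof (intro conjI exI[of _ E])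
    show "compact V" "convex V" by (fact compV) (fact convV)
    show "connected V" using convV convex_connected by blast
    show "interior V \<noteq> {}" by (fact intV)
    show "E \<subseteq> arr_edges l N" unfolding E_def arr_edges_def using edge by blast
    show "inj_on fst E" unfolding E_def using assms(4) by (auto simp: inj_on_def)
    show "frontier V = \<Union> (snd ` E)" unfolding E_def assms(8) by (simp add: image_image)
  qed
  have "\<not> (\<exists>W. W \<subset> V \<and> alcove_cond l N W)"
  proof
    assume "\<exists>W. W \<subset> V \<and> alcove_cond l N W"
    then obtain W where W: "W \<subset> V" "alcove_cond l N W" by blast
    then obtain E' where E': "E' \<subseteq> arr_edges l N" "frontier W = \<Union>(snd ` E')"
      and cW: "compact W" "interior W \<noteq> {}" unfolding alcove_cond_def by blast
    have frW: "\<And>z. z \<in> frontier W \<Longrightarrow> z \<notin> interior V"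
    proof
      fix z assume "z \<in> frontier W" "z \<in> interior V"
      then obtain i S where iS: "(i, S) \<in> E'" "z \<in> S" using E' by auto
      then have "(i, S) \<in> arr_edges l N" using E'(1) by blast
      from edge_sub[OF this] iS(2) have "i < N" "z \<in> l i" by auto
      with key \<open>z \<in> interior V\<close> show False by blast
    qed
    obtain x where x: "x \<in> V" "x \<notin> W" using W(1) by blast
    obtain p where p: "p \<in> interior W" using cW by blast
    have pV: "p \<in> interior V" using p interior_mono W(1) by blast
    have clW: "closed W" using cW compact_imp_closed by blast
    have "closed_segment p x \<inter> frontier W \<noteq> {}"
    proof (rule connected_Int_frontier)
      show "connected (closed_segment p x)" by simp
      show "closed_segment p x \<inter> W \<noteq> {}" using p interior_subset by fastforce
      show "closed_segment p x - W \<noteq> {}" using x by auto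
    qed
    then obtain z where z: "z \<in> closed_segment p x" "z \<in> frontier W" by blast
    have "z \<noteq> x" using z(2) x clW frontier_subset_closed by blast
    hence "z = p \<or> z \<in> open_segment p x" using z(1) by (auto simp: open_segment_def)
    moreover have "open_segment p x \<subseteq> interior V"
      using in_interior_closure_convex_segment[OF convV pV] x closure_subset by blast
    ultimately have "z \<in> interior V" using pV by blast
    with frW z(2) show False by blast
  qed
  with condV show ?thesis unfolding alcove_def by blast
qed

end
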